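(* For every tree $T$, the numbers $\mathrm{sn}(T,k)$ are monotone non-decreasing in $k$ (for $k\ge\chi(T)$).
   Context: For a graph $G=(V,E)$ and an integer $k\ge\chi(G)$, a proper $k$-colouring is a map $c:V\to[k]$ with $c(u)\neq c(v)$ for every edge $uv$. $\mathrm{sn}(G,k)$ is the minimum number of vertices of $G$ that have to be coloured in a partial colouring such that there exists a unique proper $k$-colouring of $G$ extending it. *)

theory Defs
  imports Main
begin

definition simple_graph :: "'a set \<Rightarrow> ('a \<Rightarrow> 'a \<Rightarrow> bool) \<Rightarrow> bool" where
  "simple_graph V E \<longleftrightarrow> finite V \<and>
     (\<forall>u v. E u v \<longrightarrow> u \<in> V \<and> v \<in> V) \<and>
     (\<forall>u v. E u v \<longrightarrow> E v u) \<and> (\<forall>v. \<not> E v v)"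

definition connected_graph :: "'a set \<Rightarrow> ('a \<Rightarrow> 'a \<Rightarrow> bool) \<Rightarrow> bool" where
  "connected_graph V E \<longleftrightarrow> V \<noteq> {} \<and> (\<forall>u\<in>V. \<forall>v\<in>V. E\<^sup>*\<^sup>* u v)"

definition is_cycle :: "('a \<Rightarrow> 'a \<Rightarrow> bool) \<Rightarrow> 'a list \<Rightarrow> bool" where
  "is_cycle E cs \<longleftrightarrow> length cs \<ge> 3 \<and> distinct cs \<and>
     (\<forall>i. Suc i < length cs \<longrightarrow> E (cs ! i) (cs ! Suc i)) \<and>
     E (last cs) (hd cs)"

definition acyclic_graph :: "('a \<Rightarrow> 'a \<Rightarrow> bool) \<Rightarrow> bool" where
  "acyclic_graph E \<longleftrightarrow> (\<nexists>cs. is_cycle E cs)"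

definition is_tree :: "'a set \<Rightarrow> ('a \<Rightarrow> 'a \<Rightarrow> bool) \<Rightarrow> bool" where
  "is_tree V E \<longleftrightarrow> simple_graph V E \<and> connected_graph V E \<and> acyclic_graph E"

definition proper_colouring :: "'a set \<Rightarrow> ('a \<Rightarrow> 'a \<Rightarrow> bool) \<Rightarrow> nat \<Rightarrow> ('a \<Rightarrow> nat) \<Rightarrow> bool" where
  "proper_colouring V E k c \<longleftrightarrow> (\<forall>v\<in>V. c v \<in> {1..k}) \<and>
     (\<forall>u\<in>V. \<forall>v\<in>V. E u v \<longrightarrow> c u \<noteq> c v)"

definition chromatic_number :: "'a set \<Rightarrow> ('a \<Rightarrow> 'a \<Rightarrow> bool) \<Rightarrow> nat" where
  "chromatic_number V E = (LEAST k. \<exists>c. proper_colouring V E k c)"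

definition unique_extension ::
  "'a set \<Rightarrow> ('a \<Rightarrow> 'a \<Rightarrow> bool) \<Rightarrow> nat \<Rightarrow> 'a set \<Rightarrow> ('a \<Rightarrow> nat) \<Rightarrow> bool" where
  "unique_extension V E k S p \<longleftrightarrow>
     (\<exists>c. proper_colouring V E k c \<and> (\<forall>v\<in>S. c v = p v) \<and>
        (\<forall>c'. proper_colouring V E k c' \<and> (\<forall>v\<in>S. c' v = p v) \<longrightarrow> (\<forall>v\<in>V. c' v = c v)))"

definition sn :: "'a set \<Rightarrow> ('a \<Rightarrow> 'a \<Rightarrow> bool) \<Rightarrow> nat \<Rightarrow> nat" where
  "sn V E k = (LEAST n. \<exists>S p. S \<subseteq> V \<and> (\<forall>v\<in>S. p v \<in> {1..k}) \<and>
                  card S = n \<and> unique_extension V E k S p)"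

end

theory Submission
  imports Defs
begin

lemma leaf_exists:
  assumes fin: "finite W" and ne: "W \<noteq> {}"
    and sym: "\<forall>u v. E u v \<longrightarrow> E v u" and irr: "\<forall>v. \<not> E v v"
    and acyc: "acyclic_graph E"
  shows "\<exists>l\<in>W. \<forall>y\<in>W. \<forall>z\<in>W. E l y \<longrightarrow> E l z \<longrightarrow> y = z"
proof -
  define P where "P = {xs. distinct xs \<and> set xs \<subseteq> W \<and> xs \<noteq> [] \<and>
      (\<forall>i. Suc i < length xs \<longrightarrow> E (xs!i) (xs!Suc i))}"
  have "P \<subseteq> {xs. set xs \<subseteq> W \<and> length xs \<le> card W}"
  proof
    fix xs assume "xs \<in> P"
    hence "distinct xs" "set xs \<subseteq> W" unfolding P_def by auto
    moreover have "card (set xs) \<le> card W" using card_mono[OF fin] calculation(2) .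
    ultimately show "xs \<in> {xs. set xs \<subseteq> W \<and> length xs \<le> card W}" using distinct_card by fastforce
  qed
  hence finP: "finite P" using finite_lists_length_le[OF fin] finite_subset by blast
  obtain w where w: "w \<in> W" using ne by blast
  have "[w] \<in> P" unfolding P_def using w by auto
  hence neP: "P \<noteq> {}" by blast
  define M where "M = Max (length ` P)"
  have "M \<in> length ` P" unfolding M_def using finP neP by simp
  then obtain xs where xs: "xs \<in> P" "length xs = M" by blast
  have maxl: "\<And>ys. ys \<in> P \<Longrightarrow> length ys \<le> length xs"
    using xs finP unfolding M_def by simp
  have d: "distinct xs" and sW: "set xs \<subseteq> W" and nn: "xs \<noteq> []"
    and adj: "\<forall>i. Suc i < length xs \<longrightarrow> E (xs!i) (xs!Suc i)" using xs(1) unfolding P_def by auto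
  define l where "l = last xs"
  define n where "n = length xs"
  have n1: "n \<ge> 1" using nn unfolding n_def by (cases xs) auto
  have lW: "l \<in> W" using sW nn unfolding l_def by auto
  have lnth: "l = xs ! (n - 1)" unfolding l_def n_def using nn by (simp add: last_conv_nth)
  have inxs: "y \<in> set xs" if "y \<in> W" "E l y" for y
  proof (rule ccontr)
    assume nin: "y \<notin> set xs"
    have "xs @ [y] \<in> P" unfolding P_def
    proof (intro CollectI conjI allI impI)
      fix i assume i: "Suc i < length (xs @ [y])"
      show "E ((xs @ [y]) ! i) ((xs @ [y]) ! Suc i)"
      proof (cases "Suc i < length xs")
        case True thus ?thesis using adj by (simp add: nth_append)
      next
        case False
        hence "i = n - 1" "Suc i = n" using i n1 unfolding n_def by auto
        thus ?thesis using that(2) lnth unfolding n_def by (simp add: nth_append)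
      qed
    qed (use d nin sW that in auto)
    thus False using maxl[of "xs @ [y]"] by simp
  qed
  have "\<forall>y\<in>W. \<forall>z\<in>W. E l y \<longrightarrow> E l z \<longrightarrow> y = z"
  proof (intro ballI impI, rule ccontr)
    fix y z assume yz: "y \<in> W" "z \<in> W" "E l y" "E l z" "y \<noteq> z"
    obtain i where i: "i < n" "xs ! i = y" using inxs yz unfolding n_def by (metis in_set_conv_nth)
    obtain j where j: "j < n" "xs ! j = z" using inxs yz unfolding n_def by (metis in_set_conv_nth)
    have "i \<noteq> n - 1" using i yz(3) lnth irr by auto
    moreover have "j \<noteq> n - 1" using j yz(4) lnth irr by auto
    moreover have "i \<noteq> j" using i j yz by auto
    ultimately have "min i j + 3 \<le> n" using i j by linarith
    then obtain t where t: "t + 3 \<le> n" "E l (xs ! t)"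
      using i j yz by (cases "i \<le> j") (auto simp: min_def)
    have "is_cycle E (drop t xs)" unfolding is_cycle_def
    proof (intro conjI allI impI)
      show "3 \<le> length (drop t xs)" using t unfolding n_def by simp
      show "distinct (drop t xs)" using d by simp
      fix q assume "Suc q < length (drop t xs)"
      thus "E (drop t xs ! q) (drop t xs ! Suc q)" using adj by simp
    next
      have "last (drop t xs) = l" unfolding l_def using t unfolding n_def by simp
      moreover have "hd (drop t xs) = xs ! t" using t unfolding n_def by (simp add: hd_drop_conv_nth)
      ultimately show "E (last (drop t xs)) (hd (drop t xs))" using t sym by auto
    qed
    thus False using acyc unfolding acyclic_graph_def by blast
  qed
  thus ?thesis using lW by blast
qed

lemma avail_colour:
  assumes "finite X" "card X < k" shows "\<exists>a\<in>{1..k}. a \<notin> X"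
proof (rule ccontr)
  assume "\<not> ?thesis"
  hence "{1..k} \<subseteq> X" by blast
  hence "card {1..k} \<le> card X" using assms(1) card_mono by blast
  thus False using assms(2) by simp
qed

lemma card_le1_image:
  assumes "finite B" "card B \<le> 1" shows "card (f ` B) = card B"
proof -
  have "\<forall>a1\<in>B. \<forall>a2\<in>B. a1 = a2" using card_le_Suc0_iff_eq[OF assms(1)] assms(2) by simp
  hence "inj_on f B" unfolding inj_on_def by blast
  thus ?thesis by (rule card_image)
qed

lemma list_recolour:
  assumes sym: "\<forall>u v. E u v \<longrightarrow> E v u" and irr: "\<forall>v. \<not> E v v"
    and acyc: "acyclic_graph E"
  shows "finite W \<Longrightarrow> W \<noteq> {} \<Longrightarrow> (\<forall>x\<in>W. 2 \<le> card (L x)) \<Longrightarrow>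
    \<exists>c2. (\<forall>x\<in>W. c2 x \<in> L x) \<and> (\<forall>x\<in>W. \<forall>y\<in>W. E x y \<longrightarrow> c2 x \<noteq> c2 y)
        \<and> (\<exists>x\<in>W. c2 x \<noteq> (c0 x :: 'b))"
proof (induction "card W" arbitrary: W rule: less_induct)
  case less
  obtain l where l: "l \<in> W" and lf: "\<forall>y\<in>W. \<forall>z\<in>W. E l y \<longrightarrow> E l z \<longrightarrow> y = z"
    using leaf_exists[OF less.prems(1,2) sym irr acyc] by blast
  have cL: "2 \<le> card (L l)" using less.prems(3) l by blast
  show ?case
  proof (cases "W - {l} = {}")
    case True
    hence W: "W = {l}" using l by blast
    have "\<not> L l \<subseteq> {c0 l}"
    proof
      assume "L l \<subseteq> {c0 l}"
      hence "card (L l) \<le> card {c0 l}" by (rule card_mono[rotated]) simp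
      thus False using cL by simp
    qed
    then obtain a where a: "a \<in> L l" "a \<noteq> c0 l" by blast
    show ?thesis
      by (rule exI[of _ "\<lambda>_. a"]) (use W a irr in auto)
  next
    case False
    have "card (W - {l}) < card W" by (rule card_Diff1_less[OF less.prems(1) l])
    moreover have "\<forall>x\<in>W - {l}. 2 \<le> card (L x)" using less.prems(3) by blast
    ultimately obtain c2 where c2: "\<forall>x\<in>W - {l}. c2 x \<in> L x"
      "\<forall>x\<in>W - {l}. \<forall>y\<in>W - {l}. E x y \<longrightarrow> c2 x \<noteq> c2 y"
      "\<exists>x\<in>W - {l}. c2 x \<noteq> c0 x"
      using less.hyps[of "W - {l}"] less.prems(1) False by auto
    define N where "N = {y\<in>W - {l}. E l y}"
    have finN: "finite N" unfolding N_def using less.prems(1) by simp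
    have "card N \<le> 1" using card_le_Suc0_iff_eq[OF finN] lf unfolding N_def by auto
    hence "card (c2 ` N) \<le> 1" using card_image_le[OF finN, of c2] by linarith
    have "\<not> L l \<subseteq> c2 ` N"
    proof
      assume "L l \<subseteq> c2 ` N"
      hence "card (L l) \<le> card (c2 ` N)" by (rule card_mono[rotated]) (use finN in simp)
      thus False using cL \<open>card (c2 ` N) \<le> 1\<close> by simp
    qed
    then obtain a where a: "a \<in> L l" "a \<notin> c2 ` N" by blast
    show ?thesis
    proof (rule exI[of _ "c2(l := a)"], intro conjI ballI impI)
      fix x assume "x \<in> W" thus "(c2(l := a)) x \<in> L x" using c2(1) a by auto
    next
      fix x y assume xy: "x \<in> W" "y \<in> W" "E x y"
      show "(c2(l := a)) x \<noteq> (c2(l := a)) y"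
      proof (cases "x = l")
        case True
        hence "y \<noteq> l" using xy irr by auto
        hence "y \<in> N" unfolding N_def using xy True by auto
        thus ?thesis using True a \<open>y \<noteq> l\<close> by auto
      next
        case xl: False
        show ?thesis
        proof (cases "y = l")
          case True
          hence "x \<in> N" unfolding N_def using xy xl sym by auto
          thus ?thesis using True a xl by auto
        next
          case False
          thus ?thesis using xl xy c2(2) by auto
        qed
      qed
    next
      show "\<exists>x\<in>W. (c2(l := a)) x \<noteq> c0 x" using c2(3) by auto
    qed
  qed
qed

lemma construct:
  assumes sym: "\<forall>u v. E u v \<longrightarrow> E v u" and irr: "\<forall>v. \<not> E v v"
    and acyc: "acyclic_graph E" and RE: "\<forall>x y. R x y \<longrightarrow> E x y"
  shows "finite W \<Longrightarrow> (\<forall>x\<in>W. d x \<le> card {y\<in>W. R x y} \<and> d x + 1 \<le> k) \<Longrightarrow> 1 \<le> k \<Longrightarrow>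
    (\<forall>x\<in>W. \<forall>y\<in>W. E x y \<longrightarrow> 2 \<le> k) \<Longrightarrow>
    \<exists>c. (\<forall>x\<in>W. c x \<in> {1..k}) \<and> (\<forall>x\<in>W. \<forall>y\<in>W. E x y \<longrightarrow> c x \<noteq> c y)
        \<and> (\<forall>x\<in>W. d x \<le> card (c ` {y\<in>W. R x y}))"
proof (induction "card W" arbitrary: W d rule: less_induct)
  case less
  show ?case
  proof (cases "W = {}")
    case True thus ?thesis by auto
  next
    case False
    obtain l where l: "l \<in> W" and lf: "\<forall>y\<in>W. \<forall>z\<in>W. E l y \<longrightarrow> E l z \<longrightarrow> y = z"
      using leaf_exists[OF less.prems(1) False sym irr acyc] by blast
    define W' where "W' = W - {l}"
    define d' where "d' = (\<lambda>x. min (d x) (card {y\<in>W'. R x y}))"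
    have finW: "finite W" using less.prems(1) .
    have finW': "finite W'" unfolding W'_def using finW by simp
    have "card W' < card W" unfolding W'_def by (rule card_Diff1_less[OF finW l])
    moreover have "\<forall>x\<in>W'. d' x \<le> card {y\<in>W'. R x y} \<and> d' x + 1 \<le> k"
      using less.prems(2) unfolding d'_def W'_def by fastforce
    moreover have "\<forall>x\<in>W'. \<forall>y\<in>W'. E x y \<longrightarrow> 2 \<le> k" using less.prems(4) unfolding W'_def by blast
    ultimately obtain c' where c': "\<forall>x\<in>W'. c' x \<in> {1..k}"
      "\<forall>x\<in>W'. \<forall>y\<in>W'. E x y \<longrightarrow> c' x \<noteq> c' y"
      "\<forall>x\<in>W'. d' x \<le> card (c' ` {y\<in>W'. R x y})"
      using less.hyps[of W' d'] finW' less.prems(3) by blast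
    define N where "N = {y\<in>W'. E l y}"
    have Nsub: "\<forall>y\<in>N. \<forall>z\<in>N. y = z" using lf unfolding N_def W'_def by auto
    have "\<exists>a\<in>{1..k}. a \<notin> c' ` N \<and>
       (\<forall>v\<in>N. card {y\<in>W'. R v y} < d v \<longrightarrow> a \<notin> c' ` {y\<in>W'. R v y})"
    proof (cases "N = {}")
      case True thus ?thesis using less.prems(3) by auto
    next
      case False
      then obtain v where v: "v \<in> N" by blast
      hence Nv: "N = {v}" using Nsub by blast
      have vW: "v \<in> W" "E l v" using v unfolding N_def W'_def by auto
      have k2: "2 \<le> k" using less.prems(4) l vW by blast
      define A where "A = {y\<in>W'. R v y}"
      have finA: "finite A" unfolding A_def using finW' by simp
      show ?thesis
      proof (cases "card A < d v")
        case True
        have "card (insert (c' v) (c' ` A)) \<le> Suc (card (c' ` A))" using finA by (simp add: card_insert_if)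
        also have "\<dots> \<le> Suc (card A)" using card_image_le[OF finA] by simp
        also have "\<dots> < k" using True less.prems(2) vW by fastforce
        finally obtain a where "a \<in> {1..k}" "a \<notin> insert (c' v) (c' ` A)"
          using avail_colour[of "insert (c' v) (c' ` A)" k] finA by blast
        thus ?thesis unfolding Nv A_def by auto
      next
        case False
        obtain a where "a \<in> {1..k}" "a \<notin> {c' v}"
          using avail_colour[of "{c' v}" k] k2 by auto
        thus ?thesis using False unfolding Nv A_def by auto
      qed
    qed
    then obtain a where a: "a \<in> {1..k}" "a \<notin> c' ` N"
       "\<forall>v\<in>N. card {y\<in>W'. R v y} < d v \<longrightarrow> a \<notin> c' ` {y\<in>W'. R v y}" by blast
    define c where "c = c'(l := a)"
    have cW': "\<forall>x\<in>W'. c x = c' x" unfolding c_def W'_def by auto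
    have imgA: "c ` B = c' ` B" if "B \<subseteq> W'" for B using cW' that by (metis (no_types, lifting) image_cong subsetD)
    show ?thesis
    proof (rule exI[of _ c], intro conjI ballI impI)
      fix x assume "x \<in> W" thus "c x \<in> {1..k}" using c'(1) a(1) unfolding c_def W'_def by auto
    next
      fix x y assume xy: "x \<in> W" "y \<in> W" "E x y"
      show "c x \<noteq> c y"
      proof (cases "x = l")
        case True
        hence "y \<noteq> l" using xy irr by auto
        hence "y \<in> N" unfolding N_def W'_def using xy True by auto
        thus ?thesis using True a(2) \<open>y \<noteq> l\<close> unfolding c_def by auto
      next
        case xl: False
        show ?thesis
        proof (cases "y = l")
          case True
          hence "x \<in> N" unfolding N_def W'_def using xy xl sym by auto
          thus ?thesis using True a(2) xl unfolding c_def by auto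
        next
          case False
          thus ?thesis using xl xy c'(2) unfolding c_def W'_def by auto
        qed
      qed
    next
      fix x assume xW: "x \<in> W"
      define B where "B = {y\<in>W. R x y}"
      define A where "A = {y\<in>W'. R x y}"
      have finB: "finite B" unfolding B_def using finW by simp
      have finA: "finite A" unfolding A_def using finW' by simp
      have AB: "A \<subseteq> B" unfolding A_def B_def W'_def by auto
      have AW': "A \<subseteq> W'" unfolding A_def by auto
      have dB: "d x \<le> card B" using less.prems(2) xW unfolding B_def by blast
      show "d x \<le> card (c ` B)"
      proof (cases "x = l")
        case True
        have "B \<subseteq> N" unfolding B_def N_def W'_def using True RE irr by auto
        hence "card B \<le> 1" using card_le_Suc0_iff_eq[OF finB] Nsub by auto
        hence "card (c ` B) = card B" using card_le1_image[OF finB] by blast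
        thus ?thesis using dB by simp
      next
        case xl: False
        hence xW': "x \<in> W'" unfolding W'_def using xW by auto
        show ?thesis
        proof (cases "d x \<le> card A")
          case True
          hence "d x \<le> card (c' ` A)" using c'(3) xW' unfolding d'_def A_def by auto
          also have "\<dots> = card (c ` A)" using imgA[OF AW'] by simp
          also have "\<dots> \<le> card (c ` B)" by (rule card_mono) (use finB AB in auto)
          finally show ?thesis .
        next
          case False
          have "B \<noteq> A" using False dB by auto
          hence lB: "l \<in> B" using AB unfolding A_def B_def W'_def by auto
          hence Bi: "B = insert l A" unfolding A_def B_def W'_def by auto
          have lA: "l \<notin> A" unfolding A_def W'_def by auto
          have "R x l" using lB unfolding B_def by auto
          hence "E l x" using RE sym by blast
          hence xN: "x \<in> N" unfolding N_def using xW' by auto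
          have cB: "card B = Suc (card A)" using Bi lA finA by simp
          have dx: "d x = Suc (card A)" using False dB cB by simp
          have "card A \<le> card (c' ` A)" using c'(3) xW' False unfolding d'_def A_def by auto
          hence cA: "card (c' ` A) = card A" using card_image_le[OF finA, of c'] by simp
          have anA: "a \<notin> c' ` A" using a(3) xN False unfolding A_def by auto
          have "c ` B = insert a (c' ` A)" unfolding Bi image_insert imgA[OF AW'] by (simp add: c_def)
          hence "card (c ` B) = Suc (card A)" using anA cA finA by simp
          thus ?thesis using dx by simp
        qed
      qed
    qed
  qed
qed

lemma suff:
  assumes pc: "proper_colouring V E k c" and SV: "S \<subseteq> V"
    and cov: "\<forall>x\<in>V - S. k \<le> card (c ` {y\<in>V. R x y}) + 1"
    and RE: "\<forall>x y. R x y \<longrightarrow> E x y"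
    and rk: "\<forall>x\<in>V. \<forall>y\<in>V. R x y \<longrightarrow> y \<in> S \<or> (m y :: nat) < m x"
  shows "unique_extension V E k S c"
  unfolding unique_extension_def
proof (rule exI[of _ c], intro conjI allI impI)
  show "proper_colouring V E k c" by (rule pc)
  show "\<forall>v\<in>S. c v = c v" by simp
  fix c2 assume a: "proper_colouring V E k c2 \<and> (\<forall>v\<in>S. c2 v = c v)"
  have "c2 x = c x" if "x \<in> V" for x
    using that
  proof (induction "m x" arbitrary: x rule: less_induct)
    case less
    show ?case
    proof (cases "x \<in> S")
      case True thus ?thesis using a by blast
    next
      case False
      define B where "B = c ` {y\<in>V. R x y}"
      have cx: "c x \<in> {1..k}" using pc less.prems unfolding proper_colouring_def by blast
      have Bsub: "B \<subseteq> {1..k} - {c x}"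
        using pc less.prems RE unfolding B_def proper_colouring_def by fastforce
      have "card ({1..k} - {c x}) = k - 1" using cx by simp
      moreover have "k \<le> card B + 1" using cov less.prems False unfolding B_def by blast
      ultimately have Beq: "B = {1..k} - {c x}"
        by (intro card_seteq[OF _ Bsub]) auto
      show ?thesis
      proof (rule ccontr)
        assume ne: "c2 x \<noteq> c x"
        have "c2 x \<in> {1..k}" using a less.prems unfolding proper_colouring_def by blast
        hence "c2 x \<in> B" using ne Beq by blast
        then obtain y where y: "y \<in> V" "R x y" "c2 x = c y" unfolding B_def by blast
        have "c2 y = c y"
        proof (cases "y \<in> S")
          case True thus ?thesis using a by blast
        next
          case False
          hence "m y < m x" using rk less.prems y by blast
          thus ?thesis using less.hyps y(1) by blast
        qed
        moreover have "c2 x \<noteq> c2 y" using a less.prems y RE unfolding proper_colouring_def by blast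
        ultimately show False using y by simp
      qed
    qed
  qed
  thus "\<forall>v\<in>V. c2 v = c v" by blast
qed

lemma forcing:
  assumes sg: "simple_graph V E" and acyc: "acyclic_graph E" and SV: "S \<subseteq> V"
    and pc: "proper_colouring V E k c"
    and uniq: "\<forall>c2. proper_colouring V E k c2 \<and> (\<forall>v\<in>S. c2 v = c v) \<longrightarrow> (\<forall>v\<in>V. c2 v = c v)"
  shows "\<exists>(m::'a \<Rightarrow> nat) R. (\<forall>x y. R x y \<longrightarrow> E x y) \<and> (\<forall>x\<in>V. \<forall>y\<in>V. R x y \<longrightarrow> y \<in> S \<or> m y < m x)
     \<and> (\<forall>x\<in>V - S. k \<le> card (c ` {y\<in>V. R x y}) + 1)"
proof -
  have finV: "finite V" and Ein: "\<forall>u v. E u v \<longrightarrow> u \<in> V \<and> v \<in> V"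
    and sym: "\<forall>u v. E u v \<longrightarrow> E v u" and irr: "\<forall>v. \<not> E v v"
    using sg unfolding simple_graph_def by auto
  define F where "F = rec_nat S (\<lambda>n A. A \<union> {x\<in>V. k \<le> card (c ` {y. E x y \<and> y \<in> A}) + 1})"
  have F0: "F 0 = S" unfolding F_def by simp
  have FS: "F (Suc n) = F n \<union> {x\<in>V. k \<le> card (c ` {y. E x y \<and> y \<in> F n}) + 1}" for n
    unfolding F_def by simp
  have FV: "F n \<subseteq> V" for n by (induction n) (use SV F0 FS in auto)
  have Fmono: "F n \<subseteq> F (Suc n)" for n using FS by blast
  have Fmono': "m \<le> n \<Longrightarrow> F m \<subseteq> F n" for m n
    by (rule lift_Suc_mono_le[of F]) (use Fmono in auto)
  have "\<exists>N. F (Suc N) = F N"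
  proof (rule ccontr)
    assume "\<not> ?thesis"
    hence ps: "F n \<subset> F (Suc n)" for n using Fmono by blast
    have "n \<le> card (F n)" for n
    proof (induction n)
      case (Suc n)
      have "card (F n) < card (F (Suc n))"
        by (rule psubset_card_mono[OF finite_subset[OF FV finV] ps])
      thus ?case using Suc by simp
    qed simp
    moreover have "card (F n) \<le> card V" for n by (rule card_mono[OF finV FV])
    ultimately show False by (metis Suc_n_not_le_n le_trans)
  qed
  then obtain N where FN: "F (Suc N) = F N" by blast
  have closed: "x \<in> F N" if "x \<in> V" "k \<le> card (c ` {y. E x y \<and> y \<in> F N}) + 1" for x
    using FS[of N] FN that by blast
  have allV: "F N = V"
  proof (rule ccontr)
    assume "F N \<noteq> V"
    define W where "W = V - F N"
    have Wne: "W \<noteq> {}" using \<open>F N \<noteq> V\<close> FV unfolding W_def by blast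
    have finW: "finite W" unfolding W_def using finV by simp
    define L where "L = (\<lambda>x. {1..k} - c ` {y. E x y \<and> y \<in> F N})"
    have "2 \<le> card (L x)" if "x \<in> W" for x
    proof -
      have xV: "x \<in> V" "x \<notin> F N" using that unfolding W_def by auto
      have lt: "card (c ` {y. E x y \<and> y \<in> F N}) + 2 \<le> k" using closed[OF xV(1)] xV(2) by linarith
      have sub: "c ` {y. E x y \<and> y \<in> F N} \<subseteq> {1..k}" using pc FV unfolding proper_colouring_def by blast
      have "card (L x) = k - card (c ` {y. E x y \<and> y \<in> F N})"
        unfolding L_def by (subst card_Diff_subset) (use sub finite_subset in auto)
      thus ?thesis using lt by simp
    qed
    then obtain c2 where c2: "\<forall>x\<in>W. c2 x \<in> L x" "\<forall>x\<in>W. \<forall>y\<in>W. E x y \<longrightarrow> c2 x \<noteq> c2 y"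
      "\<exists>x\<in>W. c2 x \<noteq> c x"
      using list_recolour[OF sym irr acyc finW Wne, of L c] by blast
    define c3 where "c3 = (\<lambda>x. if x \<in> W then c2 x else c x)"
    have pc3: "proper_colouring V E k c3"
      unfolding proper_colouring_def
    proof (intro conjI ballI impI)
      fix v assume "v \<in> V" thus "c3 v \<in> {1..k}"
        using c2(1) pc unfolding c3_def L_def proper_colouring_def by auto
    next
      fix u v assume uv: "u \<in> V" "v \<in> V" "E u v"
      show "c3 u \<noteq> c3 v"
      proof (cases "u \<in> W")
        case uW: True
        show ?thesis
        proof (cases "v \<in> W")
          case True thus ?thesis using uW uv c2(2) unfolding c3_def by auto
        next
          case False
          hence "v \<in> F N" using uv unfolding W_def by auto
          hence "c v \<in> c ` {y. E u y \<and> y \<in> F N}" using uv by auto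
          thus ?thesis using c2(1) uW False unfolding c3_def L_def by auto
        qed
      next
        case uW: False
        show ?thesis
        proof (cases "v \<in> W")
          case True
          have "u \<in> F N" using uv uW unfolding W_def by auto
          hence "c u \<in> c ` {y. E v y \<and> y \<in> F N}" using uv sym by auto
          thus ?thesis using c2(1) uW True unfolding c3_def L_def by auto
        next
          case False thus ?thesis using uW uv pc unfolding c3_def proper_colouring_def by auto
        qed
      qed
    qed
    have "S \<subseteq> F N" using Fmono'[of 0 N] F0 by simp
    hence "\<forall>v\<in>S. c3 v = c v" unfolding c3_def W_def by auto
    hence "\<forall>v\<in>V. c3 v = c v" using uniq pc3 by blast
    thus False using c2(3) unfolding c3_def W_def by auto
  qed
  define m where "m = (\<lambda>x. LEAST n. x \<in> F n)"
  define R where "R = (\<lambda>x y. E x y \<and> y \<in> V \<and> (y \<in> S \<or> m y < m x))"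
  have "\<forall>x\<in>V - S. k \<le> card (c ` {y\<in>V. R x y}) + 1"
  proof
    fix x assume x: "x \<in> V - S"
    have xF: "x \<in> F (m x)" unfolding m_def by (rule LeastI[of _ N]) (use allV x in auto)
    have "m x \<noteq> 0" using xF x F0 by (metis DiffE)
    then obtain n where n: "m x = Suc n" using not0_implies_Suc by blast
    have "x \<notin> F n" unfolding m_def by (rule not_less_Least) (use n m_def in simp)
    hence cnt: "k \<le> card (c ` {y. E x y \<and> y \<in> F n}) + 1" using xF n FS by auto
    have "{y. E x y \<and> y \<in> F n} \<subseteq> {y\<in>V. R x y}"
    proof
      fix y assume y: "y \<in> {y. E x y \<and> y \<in> F n}"
      have "m y \<le> n" unfolding m_def by (rule Least_le) (use y in simp)
      thus "y \<in> {y\<in>V. R x y}" using y FV n unfolding R_def by auto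
    qed
    hence "card (c ` {y. E x y \<and> y \<in> F n}) \<le> card (c ` {y\<in>V. R x y})"
      by (intro card_mono image_mono) (use finV in auto)
    thus "k \<le> card (c ` {y\<in>V. R x y}) + 1" using cnt by linarith
  qed
  moreover have "\<forall>x y. R x y \<longrightarrow> E x y" unfolding R_def by blast
  moreover have "\<forall>x\<in>V. \<forall>y\<in>V. R x y \<longrightarrow> y \<in> S \<or> m y < m x" unfolding R_def by blast
  ultimately show ?thesis by blast
qed

lemma exists_colouring:
  assumes "finite V" "\<forall>v. \<not> E v v"
  shows "\<exists>k c. proper_colouring V E k c"
proof -
  obtain h where h: "bij_betw h V {0..<card V}" using ex_bij_betw_finite_nat[OF assms(1)] by blast
  have "proper_colouring V E (card V) (\<lambda>x. Suc (h x))"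
    unfolding proper_colouring_def
  proof (intro conjI ballI impI)
    fix v assume "v \<in> V" thus "Suc (h v) \<in> {1..card V}" using h bij_betwE by fastforce
  next
    fix u v assume "u \<in> V" "v \<in> V" "E u v"
    hence "u \<noteq> v" using assms(2) by auto
    thus "Suc (h u) \<noteq> Suc (h v)" using h \<open>u \<in> V\<close> \<open>v \<in> V\<close> unfolding bij_betw_def inj_on_def by auto
  qed
  thus ?thesis by blast
qed

theorem corollary1:
  fixes V :: "'a set" and E :: "'a \<Rightarrow> 'a \<Rightarrow> bool" and k k' :: nat
  assumes "is_tree V E"
    and "chromatic_number V E \<le> k"
    and "k \<le> k'"
  shows "sn V E k \<le> sn V E k'"
proof -
  have sg: "simple_graph V E" and acyc: "acyclic_graph E" and Vne: "V \<noteq> {}"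
    using assms(1) unfolding is_tree_def connected_graph_def by auto
  have finV: "finite V" and sym: "\<forall>u v. E u v \<longrightarrow> E v u" and irr: "\<forall>v. \<not> E v v"
    and Ein: "\<forall>u v. E u v \<longrightarrow> u \<in> V \<and> v \<in> V"
    using sg unfolding simple_graph_def by auto
  obtain c0 where c0: "proper_colouring V E (chromatic_number V E) c0"
  proof -
    obtain kk cc where "proper_colouring V E kk cc" using exists_colouring[of V E, OF finV irr] by blast
    hence "\<exists>c. proper_colouring V E (LEAST k. \<exists>c. proper_colouring V E k c) c"
      by (intro LeastI[of "\<lambda>k. \<exists>c. proper_colouring V E k c" kk]) blast
    thus ?thesis using that unfolding chromatic_number_def by blast
  qed
  have c0k: "proper_colouring V E k c0" and c0k': "proper_colouring V E k' c0"
    using c0 assms(2,3) unfolding proper_colouring_def by fastforce+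
  have k1: "1 \<le> k" using c0k Vne unfolding proper_colouring_def by fastforce
  have k2: "2 \<le> k" if "x \<in> V" "y \<in> V" "E x y" for x y
  proof (rule ccontr)
    assume "\<not> 2 \<le> k"
    hence "k = 1" using k1 by simp
    thus False using c0k that unfolding proper_colouring_def by fastforce
  qed
  define Q where "Q = (\<lambda>kk n. \<exists>S p. S \<subseteq> V \<and> (\<forall>v\<in>S. p v \<in> {1..kk}) \<and>
                  card S = n \<and> unique_extension V E kk S p)"
  have "Q k' (card V)" unfolding Q_def
  proof (intro exI conjI)
    show "V \<subseteq> V" by simp
    show "\<forall>v\<in>V. c0 v \<in> {1..k'}" using c0k' unfolding proper_colouring_def by blast
    show "unique_extension V E k' V c0" unfolding unique_extension_def using c0k' by blast
  qed simp
  hence "Q k' (sn V E k')" unfolding sn_def Q_def by (rule LeastI)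
  then obtain S p where Sp: "S \<subseteq> V" "card S = sn V E k'" "unique_extension V E k' S p"
    unfolding Q_def by blast
  then obtain c' where c': "proper_colouring V E k' c'" "\<forall>v\<in>S. c' v = p v"
    "\<forall>c2. proper_colouring V E k' c2 \<and> (\<forall>v\<in>S. c2 v = p v) \<longrightarrow> (\<forall>v\<in>V. c2 v = c' v)"
    unfolding unique_extension_def by blast
  have uniq: "\<forall>c2. proper_colouring V E k' c2 \<and> (\<forall>v\<in>S. c2 v = c' v) \<longrightarrow> (\<forall>v\<in>V. c2 v = c' v)"
    using c'(2,3) by auto
  obtain m R where mR: "\<forall>x y. R x y \<longrightarrow> E x y" "\<forall>x\<in>V. \<forall>y\<in>V. R x y \<longrightarrow> y \<in> S \<or> (m::'a\<Rightarrow>nat) y < m x"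
     "\<forall>x\<in>V - S. k' \<le> card (c' ` {y\<in>V. R x y}) + 1"
    using forcing[OF sg acyc Sp(1) c'(1) uniq] by blast
  define d where "d = (\<lambda>x. if x \<in> S then 0 else k - 1)"
  have "\<forall>x\<in>V. d x \<le> card {y\<in>V. R x y} \<and> d x + 1 \<le> k"
  proof
    fix x assume x: "x \<in> V"
    show "d x \<le> card {y\<in>V. R x y} \<and> d x + 1 \<le> k"
    proof (cases "x \<in> S")
      case False
      have "card (c' ` {y\<in>V. R x y}) \<le> card {y\<in>V. R x y}" by (rule card_image_le) (use finV in simp)
      moreover have "k' \<le> card (c' ` {y\<in>V. R x y}) + 1" using mR(3) x False by blast
      ultimately show ?thesis using False assms(3) k1 unfolding d_def by auto
    qed (use k1 d_def in simp)
  qed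
  then obtain c where c: "\<forall>x\<in>V. c x \<in> {1..k}" "\<forall>x\<in>V. \<forall>y\<in>V. E x y \<longrightarrow> c x \<noteq> c y"
    "\<forall>x\<in>V. d x \<le> card (c ` {y\<in>V. R x y})"
    using construct[of E R V d k, OF sym irr acyc mR(1) finV] k1 k2 by blast
  have pc: "proper_colouring V E k c" unfolding proper_colouring_def using c(1,2) by blast
  have "\<forall>x\<in>V - S. k \<le> card (c ` {y\<in>V. R x y}) + 1"
  proof
    fix x assume "x \<in> V - S"
    hence "d x = k - 1" "x \<in> V" unfolding d_def by auto
    thus "k \<le> card (c ` {y\<in>V. R x y}) + 1" using c(3) by force
  qed
  hence ue: "unique_extension V E k S c" using suff[OF pc Sp(1) _ mR(1,2)] by blast
  have "Q k (card S)" unfolding Q_def using ue Sp(1) c(1) by blast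
  hence "sn V E k \<le> card S" unfolding sn_def Q_def by (rule Least_le)
  thus ?thesis using Sp(2) by simp
qed

end
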